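(* Consider a discounted Markov decision problem as described in the context, and let $\rho,\mu\in\Delta(\mathcal{S})$. Suppose $V_\mu$ is $L$-smooth on $\Pi$, i.e. $\|\nabla V_\mu(\pi)-\nabla V_\mu(\pi')\|_2\le L\|\pi-\pi'\|_2$ for all $\pi,\pi'\in\Pi$, for some $L>0$. Define, for $\pi\in\Pi$, \[ T_L(\pi)=\mathrm{proj}_\Pi\Bigl(\pi-\frac1L\nabla V_\mu(\pi)\Bigr),\qquad G_L(\pi)=L\bigl(\pi-T_L(\pi)\bigr). \] Then for all $\pi\in\Pi$, \[ V_\rho\bigl(T_L(\pi)\bigr)-V_\rho^\star\le\frac{2\sqrt{2|\mathcal{S}|}}{1-\gamma}\left\|\frac{d_\rho(\pi^\star)}{\mu}\right\|_\infty\|G_L(\pi)\|_2 . \]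
   Context: A discounted Markov decision problem (in cost-minimization form) consists of a finite state set $\mathcal{S}$, a finite action set $\mathcal{A}$, transition probabilities $P(s'|s,a)$, a cost function $R:\mathcal{S}\times\mathcal{A}\to[0,1]$ (written $R_{s,a}$), and a discount factor $\gamma\in[0,1)$. Policies: $\Pi=\Delta(\mathcal{A})^{|\mathcal{S}|}\subset\mathbf{R}^{|\mathcal{S}|\times|\mathcal{A}|}$, $\pi_{s,a}$ the probability of action $a$ at state $s$. $V_s(\pi)=\mathbf{E}\bigl[\sum_{t\ge0}\gamma^tR(s_t,a_t)\mid s_0=s\bigr]$ with $a_t\sim\pi_{s_t}$, $s_{t+1}\sim P(\cdot|s_t,a_t)$; $V_\rho(\pi)=\sum_s\rho_sV_s(\pi)$, $V^\star_\rho=\min_{\pi\in\Pi}V_\rho(\pi)$; $\pi^\star$ denotes a policy minimizing $V_s$ simultaneously for all $s$. $Q_{s,a}(\pi)=R_{s,a}+\gamma\sum_{s'}P(s'|s,a)V_{s'}(\pi)$. Discounted state visitation: $d_{s,s'}(\pi)=(1-\gamma)\sum_{t\ge0}\gamma^t\Pr^\pi(s_t=s'\mid s_0=s)$, $d_{\rho,s'}(\pi)=\sum_s\rho_sd_{s,s'}(\pi)$. The policy gradient $\nabla V_\mu(\pi)$ has entries $\frac1{1-\gamma}d_{\mu,s}(\pi)Q_{s,a}(\pi)$. For $p,q\in\Delta(\mathcal{S})$, $\|p/q\|_\infty=\max_sp_s/q_s$ with $0/0=1$. $\mathrm{proj}_\Pi$ denotes Euclidean projection onto $\Pi$. *)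

theory Defs
  imports "HOL-Analysis.Analysis"
begin

(* Policies are |S| x |A| real matrices: pi $ s $ a = probability of action a at state s.
   States 's and actions 'a are finite types. P s a s' = P(s'|s,a), R s a = cost. *)

definition policies :: "(real^'a^'s) set" where
  "policies = {\<pi>. \<forall>s. (\<forall>a. 0 \<le> \<pi> $ s $ a) \<and> (\<Sum>a\<in>UNIV. \<pi> $ s $ a) = 1}"

definition is_distr :: "('s::finite \<Rightarrow> real) \<Rightarrow> bool" where
  "is_distr p \<longleftrightarrow> (\<forall>s. 0 \<le> p s) \<and> (\<Sum>s\<in>UNIV. p s) = 1"

definition Ppi :: "('s \<Rightarrow> 'a::finite \<Rightarrow> 's \<Rightarrow> real) \<Rightarrow> real^'a^'s \<Rightarrow> 's \<Rightarrow> 's \<Rightarrow> real" where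
  "Ppi P \<pi> s s' = (\<Sum>a\<in>UNIV. \<pi> $ s $ a * P s a s')"

fun pstep :: "('s::finite \<Rightarrow> 'a::finite \<Rightarrow> 's \<Rightarrow> real) \<Rightarrow> real^'a^'s \<Rightarrow> nat \<Rightarrow> 's \<Rightarrow> 's \<Rightarrow> real" where
  "pstep P \<pi> 0 s s' = (if s = s' then 1 else 0)"
| "pstep P \<pi> (Suc t) s s'' = (\<Sum>s'\<in>UNIV. pstep P \<pi> t s s' * Ppi P \<pi> s' s'')"

definition Vs :: "('s::finite \<Rightarrow> 'a::finite \<Rightarrow> 's \<Rightarrow> real) \<Rightarrow> ('s \<Rightarrow> 'a \<Rightarrow> real) \<Rightarrow> real
                   \<Rightarrow> 's \<Rightarrow> real^'a^'s \<Rightarrow> real" where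
  "Vs P R \<gamma> s \<pi> = (\<Sum>t. \<gamma> ^ t * (\<Sum>s'\<in>UNIV. pstep P \<pi> t s s' * (\<Sum>a\<in>UNIV. \<pi> $ s' $ a * R s' a)))"

definition Vrho :: "('s::finite \<Rightarrow> 'a::finite \<Rightarrow> 's \<Rightarrow> real) \<Rightarrow> ('s \<Rightarrow> 'a \<Rightarrow> real) \<Rightarrow> real
                   \<Rightarrow> ('s \<Rightarrow> real) \<Rightarrow> real^'a^'s \<Rightarrow> real" where
  "Vrho P R \<gamma> \<rho> \<pi> = (\<Sum>s\<in>UNIV. \<rho> s * Vs P R \<gamma> s \<pi>)"

definition Vstar :: "('s::finite \<Rightarrow> 'a::finite \<Rightarrow> 's \<Rightarrow> real) \<Rightarrow> ('s \<Rightarrow> 'a \<Rightarrow> real) \<Rightarrow> real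
                   \<Rightarrow> ('s \<Rightarrow> real) \<Rightarrow> real" where
  "Vstar P R \<gamma> \<rho> = Inf (Vrho P R \<gamma> \<rho> ` policies)"

definition Qsa :: "('s::finite \<Rightarrow> 'a::finite \<Rightarrow> 's \<Rightarrow> real) \<Rightarrow> ('s \<Rightarrow> 'a \<Rightarrow> real) \<Rightarrow> real
                   \<Rightarrow> 's \<Rightarrow> 'a \<Rightarrow> real^'a^'s \<Rightarrow> real" where
  "Qsa P R \<gamma> s a \<pi> = R s a + \<gamma> * (\<Sum>s'\<in>UNIV. P s a s' * Vs P R \<gamma> s' \<pi>)"

definition dvis :: "('s::finite \<Rightarrow> 'a::finite \<Rightarrow> 's \<Rightarrow> real) \<Rightarrow> real \<Rightarrow> real^'a^'s \<Rightarrow> 's \<Rightarrow> 's \<Rightarrow> real" where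
  "dvis P \<gamma> \<pi> s s' = (1 - \<gamma>) * (\<Sum>t. \<gamma> ^ t * pstep P \<pi> t s s')"

definition drho :: "('s::finite \<Rightarrow> 'a::finite \<Rightarrow> 's \<Rightarrow> real) \<Rightarrow> real \<Rightarrow> ('s \<Rightarrow> real)
                    \<Rightarrow> real^'a^'s \<Rightarrow> 's \<Rightarrow> real" where
  "drho P \<gamma> \<rho> \<pi> s' = (\<Sum>s\<in>UNIV. \<rho> s * dvis P \<gamma> \<pi> s s')"

(* policy gradient of V_mu, with the entries given by the policy gradient theorem *)
definition gradV :: "('s::finite \<Rightarrow> 'a::finite \<Rightarrow> 's \<Rightarrow> real) \<Rightarrow> ('s \<Rightarrow> 'a \<Rightarrow> real) \<Rightarrow> real
                    \<Rightarrow> ('s \<Rightarrow> real) \<Rightarrow> real^'a^'s \<Rightarrow> real^'a^'s" where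
  "gradV P R \<gamma> \<mu> \<pi> = (\<chi> s a. 1 / (1 - \<gamma>) * drho P \<gamma> \<mu> \<pi> s * Qsa P R \<gamma> s a \<pi>)"

(* || p / q ||_inf = max_s p_s / q_s, with 0/0 = 1 and c/0 = infinity for c > 0 *)
definition ratio_entry :: "real \<Rightarrow> real \<Rightarrow> ereal" where
  "ratio_entry p q = (if q = 0 then (if p = 0 then 1 else \<infinity>) else ereal (p / q))"

definition dist_mismatch :: "('s::finite \<Rightarrow> real) \<Rightarrow> ('s \<Rightarrow> real) \<Rightarrow> ereal" where
  "dist_mismatch p q = Max ((\<lambda>s. ratio_entry (p s) (q s)) ` UNIV)"

definition TL :: "('s::finite \<Rightarrow> 'a::finite \<Rightarrow> 's \<Rightarrow> real) \<Rightarrow> ('s \<Rightarrow> 'a \<Rightarrow> real) \<Rightarrow> real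
                   \<Rightarrow> ('s \<Rightarrow> real) \<Rightarrow> real \<Rightarrow> real^'a^'s \<Rightarrow> real^'a^'s" where
  "TL P R \<gamma> \<mu> L \<pi> = closest_point policies (\<pi> - (1 / L) *\<^sub>R gradV P R \<gamma> \<mu> \<pi>)"

definition GL :: "('s::finite \<Rightarrow> 'a::finite \<Rightarrow> 's \<Rightarrow> real) \<Rightarrow> ('s \<Rightarrow> 'a \<Rightarrow> real) \<Rightarrow> real
                   \<Rightarrow> ('s \<Rightarrow> real) \<Rightarrow> real \<Rightarrow> real^'a^'s \<Rightarrow> real^'a^'s" where
  "GL P R \<gamma> \<mu> L \<pi> = L *\<^sub>R (\<pi> - TL P R \<gamma> \<mu> L \<pi>)"

end

theory Submission
  imports Defs
begin


lemma Ppi_nonneg: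
  assumes "\<And>s a. is_distr (P s a)" "\<pi> \<in> policies"
  shows "0 \<le> Ppi P \<pi> s s'"
  using assms unfolding Ppi_def is_distr_def policies_def by (auto intro!: sum_nonneg)

lemma Ppi_sum1:
  assumes "\<And>s a. is_distr (P s a)" "\<pi> \<in> policies"
  shows "(\<Sum>s'\<in>UNIV. Ppi P \<pi> s s') = 1"
proof -
  have "(\<Sum>s'\<in>UNIV. Ppi P \<pi> s s') = (\<Sum>a\<in>UNIV. \<pi> $ s $ a * (\<Sum>s'\<in>UNIV. P s a s'))"
    unfolding Ppi_def sum_distrib_left by (rule sum.swap)
  also have "\<dots> = 1" using assms unfolding is_distr_def policies_def by simp
  finally show ?thesis .
qed

lemma pstep_nonneg:
  assumes "\<And>s a. is_distr (P s a)" "\<pi> \<in> policies"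
  shows "0 \<le> pstep P \<pi> t s s'"
  by (induction t arbitrary: s') (auto intro!: sum_nonneg mult_nonneg_nonneg Ppi_nonneg[OF assms])

lemma pstep_sum1:
  assumes "\<And>s a. is_distr (P s a)" "\<pi> \<in> policies"
  shows "(\<Sum>s'\<in>UNIV. pstep P \<pi> t s s') = 1"
proof (induction t)
  case 0
  then show ?case by simp
next
  case (Suc t)
  have "(\<Sum>s'\<in>UNIV. pstep P \<pi> (Suc t) s s') = (\<Sum>s1\<in>UNIV. pstep P \<pi> t s s1 * (\<Sum>s'\<in>UNIV. Ppi P \<pi> s1 s'))"
    unfolding pstep.simps sum_distrib_left by (rule sum.swap)
  also have "\<dots> = 1" using Suc Ppi_sum1[OF assms] by simp
  finally show ?case .
qed

lemma pstep_le1: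
  assumes "\<And>s a. is_distr (P s a)" "\<pi> \<in> policies"
  shows "pstep P \<pi> t s s' \<le> 1"
proof -
  have "pstep P \<pi> t s s' \<le> (\<Sum>s'\<in>UNIV. pstep P \<pi> t s s')"
    by (rule member_le_sum) (auto intro: pstep_nonneg[OF assms])
  then show ?thesis using pstep_sum1[OF assms] by simp
qed

lemma pstep_right:
  "pstep P \<pi> (Suc t) s s'' = (\<Sum>s1\<in>UNIV. Ppi P \<pi> s s1 * pstep P \<pi> t s1 s'')"
proof (induction t arbitrary: s'')
  case 0
  have e: "\<And>c x. (if c then 1 else 0) * (x::real) = (if c then x else 0)" by simp
  have e': "\<And>c x. (x::real) * (if c then 1 else 0) = (if c then x else 0)" by simp
  show ?case by (simp add: e e')
next
  case (Suc t)
  have "pstep P \<pi> (Suc (Suc t)) s s'' = (\<Sum>s'\<in>UNIV. pstep P \<pi> (Suc t) s s' * Ppi P \<pi> s' s'')"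
    by simp
  also have "\<dots> = (\<Sum>s'\<in>UNIV. (\<Sum>s1\<in>UNIV. Ppi P \<pi> s s1 * pstep P \<pi> t s1 s') * Ppi P \<pi> s' s'')"
    using Suc by simp
  also have "\<dots> = (\<Sum>s1\<in>UNIV. Ppi P \<pi> s s1 * (\<Sum>s'\<in>UNIV. pstep P \<pi> t s1 s' * Ppi P \<pi> s' s''))"
    unfolding sum_distrib_left sum_distrib_right mult.assoc by (rule sum.swap)
  also have "\<dots> = (\<Sum>s1\<in>UNIV. Ppi P \<pi> s s1 * pstep P \<pi> (Suc t) s1 s'')" by simp
  finally show ?case .
qed

definition W :: "('s::finite \<Rightarrow> 'a::finite \<Rightarrow> 's \<Rightarrow> real) \<Rightarrow> real^'a^'s \<Rightarrow> real \<Rightarrow> 's \<Rightarrow> 's \<Rightarrow> real" where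
  "W P \<pi> \<gamma> s s' = (\<Sum>t. \<gamma> ^ t * pstep P \<pi> t s s')"

locale mdp_ctx =
  fixes P :: "'s::finite \<Rightarrow> 'a::finite \<Rightarrow> 's \<Rightarrow> real" and \<pi> :: "real^'a^'s" and \<gamma> :: real
  assumes Pd: "\<And>s a. is_distr (P s a)" and pol: "\<pi> \<in> policies" and g0: "0 \<le> \<gamma>" and g1: "\<gamma> < 1"
begin

lemma summable_term: "summable (\<lambda>t. \<gamma> ^ t * pstep P \<pi> t s s')"
proof (rule summable_comparison_test'[of "\<lambda>t. \<gamma> ^ t"])
  show "summable (\<lambda>t. \<gamma> ^ t)" using g0 g1 by (intro summable_geometric) simp
  fix t
  show "norm (\<gamma> ^ t * pstep P \<pi> t s s') \<le> \<gamma> ^ t"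
    using pstep_nonneg[OF Pd pol] pstep_le1[OF Pd pol] g0
    by (simp add: abs_mult mult_left_le)
qed

lemma summable_term_f: "summable (\<lambda>t. \<gamma> ^ t * pstep P \<pi> t s s' * c)"
  using summable_mult2[OF summable_term] .

lemma W_nonneg: "0 \<le> W P \<pi> \<gamma> s s'"
  unfolding W_def using pstep_nonneg[OF Pd pol] g0
  by (intro suminf_nonneg summable_term) auto

lemma W_diag: "1 \<le> W P \<pi> \<gamma> s s"
proof -
  have "(\<Sum>t. \<gamma> ^ t * pstep P \<pi> t s s) = \<gamma> ^ 0 * pstep P \<pi> 0 s s + (\<Sum>t. \<gamma> ^ Suc t * pstep P \<pi> (Suc t) s s)"
    using suminf_split_head[OF summable_term[of s s]] by simp
  moreover have "0 \<le> (\<Sum>t. \<gamma> ^ Suc t * pstep P \<pi> (Suc t) s s)"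
    using pstep_nonneg[OF Pd pol] g0 summable_Suc_iff[of "\<lambda>t. \<gamma> ^ t * pstep P \<pi> t s s", THEN iffD2, OF summable_term]
    by (intro suminf_nonneg) (auto simp del: power_Suc pstep.simps)
  ultimately show ?thesis unfolding W_def by simp
qed

lemma W_sum: "(\<Sum>t. \<gamma> ^ t * (\<Sum>s'\<in>UNIV. pstep P \<pi> t s s' * f s')) = (\<Sum>s'\<in>UNIV. W P \<pi> \<gamma> s s' * f s')"
proof -
  have "(\<Sum>t. \<gamma> ^ t * (\<Sum>s'\<in>UNIV. pstep P \<pi> t s s' * f s')) = (\<Sum>t. \<Sum>s'\<in>UNIV. \<gamma> ^ t * pstep P \<pi> t s s' * f s')"
    by (simp add: sum_distrib_left mult.assoc)
  also have "\<dots> = (\<Sum>s'\<in>UNIV. \<Sum>t. \<gamma> ^ t * pstep P \<pi> t s s' * f s')"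
    by (rule suminf_sum) (rule summable_term_f)
  also have "\<dots> = (\<Sum>s'\<in>UNIV. W P \<pi> \<gamma> s s' * f s')"
    unfolding W_def by (simp add: suminf_mult2[OF summable_term])
  finally show ?thesis .
qed

lemma W_right: "W P \<pi> \<gamma> s s'' = (if s = s'' then 1 else 0) + \<gamma> * (\<Sum>s1\<in>UNIV. Ppi P \<pi> s s1 * W P \<pi> \<gamma> s1 s'')"
proof -
  have "W P \<pi> \<gamma> s s'' = \<gamma> ^ 0 * pstep P \<pi> 0 s s'' + (\<Sum>t. \<gamma> ^ Suc t * pstep P \<pi> (Suc t) s s'')"
    unfolding W_def using suminf_split_head[OF summable_term[of s s'']] by simp
  also have "(\<Sum>t. \<gamma> ^ Suc t * pstep P \<pi> (Suc t) s s'') = (\<Sum>t. \<gamma> * (\<Sum>s1\<in>UNIV. Ppi P \<pi> s s1 * (\<gamma> ^ t * pstep P \<pi> t s1 s'')))"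
    by (simp del: pstep.simps add: pstep_right sum_distrib_left mult_ac)
  also have "\<dots> = \<gamma> * (\<Sum>t. (\<Sum>s1\<in>UNIV. Ppi P \<pi> s s1 * (\<gamma> ^ t * pstep P \<pi> t s1 s'')))"
    by (rule suminf_mult) (intro summable_sum summable_mult summable_term)
  also have "(\<Sum>t. (\<Sum>s1\<in>UNIV. Ppi P \<pi> s s1 * (\<gamma> ^ t * pstep P \<pi> t s1 s''))) = (\<Sum>s1\<in>UNIV. Ppi P \<pi> s s1 * W P \<pi> \<gamma> s1 s'')"
    unfolding W_def by (subst suminf_sum) (auto intro: summable_mult summable_term simp: suminf_mult[OF summable_term])
  finally show ?thesis by simp
qed

lemma W_bellman: "(\<Sum>s'\<in>UNIV. W P \<pi> \<gamma> s s' * f s') = f s + \<gamma> * (\<Sum>s1\<in>UNIV. Ppi P \<pi> s s1 * (\<Sum>s'\<in>UNIV. W P \<pi> \<gamma> s1 s' * f s'))"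
proof -
  have "(\<Sum>s'\<in>UNIV. W P \<pi> \<gamma> s s' * f s') = (\<Sum>s'\<in>UNIV. (if s = s' then f s' else 0) + \<gamma> * (\<Sum>s1\<in>UNIV. Ppi P \<pi> s s1 * W P \<pi> \<gamma> s1 s' * f s'))"
    by (intro sum.cong refl, subst W_right) (simp add: algebra_simps sum_distrib_right sum_distrib_left)
  also have "\<dots> = f s + \<gamma> * (\<Sum>s'\<in>UNIV. \<Sum>s1\<in>UNIV. Ppi P \<pi> s s1 * W P \<pi> \<gamma> s1 s' * f s')"
    by (simp add: sum.distrib sum_distrib_left)
  also have "(\<Sum>s'\<in>UNIV. \<Sum>s1\<in>UNIV. Ppi P \<pi> s s1 * W P \<pi> \<gamma> s1 s' * f s') = (\<Sum>s1\<in>UNIV. Ppi P \<pi> s s1 * (\<Sum>s'\<in>UNIV. W P \<pi> \<gamma> s1 s' * f s'))"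
    by (subst sum.swap) (simp add: sum_distrib_left mult.assoc)
  finally show ?thesis .
qed

lemma W_ident: "(\<Sum>s'\<in>UNIV. W P \<pi> \<gamma> s s' * (g s' - \<gamma> * (\<Sum>s1\<in>UNIV. Ppi P \<pi> s' s1 * g s1))) = g s"
proof -
  define F where "F t = \<gamma> ^ t * (\<Sum>s'\<in>UNIV. pstep P \<pi> t s s' * g s')" for t
  have Fsuc: "\<gamma> ^ t * (\<Sum>s'\<in>UNIV. pstep P \<pi> t s s' * (\<gamma> * (\<Sum>s1\<in>UNIV. Ppi P \<pi> s' s1 * g s1))) = F (Suc t)" for t
  proof -
    have "(\<Sum>s'\<in>UNIV. pstep P \<pi> t s s' * (\<Sum>s1\<in>UNIV. Ppi P \<pi> s' s1 * g s1)) = (\<Sum>s1\<in>UNIV. pstep P \<pi> (Suc t) s s1 * g s1)"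
      unfolding pstep.simps sum_distrib_left sum_distrib_right mult.assoc by (rule sum.swap)
    then show ?thesis unfolding F_def
      by (simp add: sum_distrib_left[symmetric] mult_ac)
  qed
  have "F \<longlonglongrightarrow> 0"
  proof (rule Lim_null_comparison)
    let ?B = "\<Sum>s'\<in>UNIV. \<bar>g s'\<bar>"
    show "\<forall>\<^sub>F t in sequentially. norm (F t) \<le> \<gamma> ^ t * ?B"
    proof (intro always_eventually allI)
      fix t
      have "\<bar>\<Sum>s'\<in>UNIV. pstep P \<pi> t s s' * g s'\<bar> \<le> (\<Sum>s'\<in>UNIV. \<bar>pstep P \<pi> t s s' * g s'\<bar>)"
        by (rule sum_abs)
      also have "\<dots> \<le> ?B"
        using pstep_nonneg[OF Pd pol] pstep_le1[OF Pd pol]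
        by (intro sum_mono) (simp add: abs_mult mult_left_le_one_le)
      finally show "norm (F t) \<le> \<gamma> ^ t * ?B" unfolding F_def using g0
        by (simp add: abs_mult mult_left_mono)
    qed
    show "(\<lambda>t. \<gamma> ^ t * ?B) \<longlonglongrightarrow> 0"
      using g0 g1 by (intro tendsto_mult_left_zero LIMSEQ_power_zero) auto
  qed
  then have "(\<lambda>t. F t - F (Suc t)) sums (F 0 - 0)" by (rule telescope_sums')
  then have "(\<Sum>t. F t - F (Suc t)) = F 0" by (simp add: sums_iff)
  moreover have "F 0 = g s"
  proof -
    have e: "\<And>c x. (if c then 1 else 0) * (x::real) = (if c then x else 0)" by simp
    show ?thesis unfolding F_def by (simp add: e)
  qed
  moreover have "F t - F (Suc t) = \<gamma> ^ t * (\<Sum>s'\<in>UNIV. pstep P \<pi> t s s' * (g s' - \<gamma> * (\<Sum>s1\<in>UNIV. Ppi P \<pi> s' s1 * g s1)))" for t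
  proof -
    have "\<gamma> ^ t * (\<Sum>s'\<in>UNIV. pstep P \<pi> t s s' * (g s' - \<gamma> * (\<Sum>s1\<in>UNIV. Ppi P \<pi> s' s1 * g s1)))
      = F t - \<gamma> ^ t * (\<Sum>s'\<in>UNIV. pstep P \<pi> t s s' * (\<gamma> * (\<Sum>s1\<in>UNIV. Ppi P \<pi> s' s1 * g s1)))"
      unfolding F_def by (simp only: right_diff_distrib sum_subtractf)
    then show ?thesis using Fsuc[of t] by simp
  qed
  ultimately show ?thesis using W_sum[of s "\<lambda>s'. g s' - \<gamma> * (\<Sum>s1\<in>UNIV. Ppi P \<pi> s' s1 * g s1)"] by simp
qed

end



lemma policies_closed: "closed (policies :: (real^'a::finite^'s::finite) set)"
proof -
  have eq: "policies = (\<Inter>s. (\<Inter>a. {\<pi>::real^'a^'s. 0 \<le> \<pi> $ s $ a}) \<inter> {\<pi>. (\<Sum>a\<in>UNIV. \<pi> $ s $ a) = 1})"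
    unfolding policies_def by auto
  have c1: "closed {\<pi>::real^'a^'s. 0 \<le> \<pi> $ s $ a}" for s a
    by (intro closed_Collect_le continuous_intros)
  have c2: "closed {\<pi>::real^'a^'s. (\<Sum>a\<in>UNIV. \<pi> $ s $ a) = 1}" for s
    by (intro closed_Collect_eq continuous_intros)
  have c3: "closed ((\<Inter>a. {\<pi>::real^'a^'s. 0 \<le> \<pi> $ s $ a}) \<inter> {\<pi>. (\<Sum>a\<in>UNIV. \<pi> $ s $ a) = 1})" for s
    by (rule closed_Int[OF closed_INT c2]) (use c1 in blast)
  show ?thesis unfolding eq by (rule closed_INT) (use c3 in blast)
qed

lemma policies_convex: "convex (policies :: (real^'a::finite^'s::finite) set)"
  unfolding convex_def policies_def
  by (auto simp: sum.distrib sum_distrib_left[symmetric])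

lemma policies_ne: "(\<chi> s a. if a = b then 1 else 0) \<in> (policies :: (real^'a::finite^'s::finite) set)"
  unfolding policies_def by auto

lemma sq_le:
  fixes p q :: real assumes h: "0 \<le> p" "0 \<le> q" "p \<le> 1" "q \<le> 1"
  shows "(p - q)\<^sup>2 \<le> p + q"
proof -
  have "p * p \<le> p" using h by (simp add: mult_left_le_one_le)
  moreover have "q * q \<le> q" using h by (simp add: mult_left_le_one_le)
  moreover have "0 \<le> p * q" using h by simp
  ultimately show ?thesis by (simp add: power2_eq_square algebra_simps)
qed

lemma policy_le1: "\<pi> \<in> policies \<Longrightarrow> \<pi> $ s $ a \<le> 1"
proof -
  assume h: "\<pi> \<in> policies"
  have "\<pi> $ s $ a \<le> (\<Sum>a\<in>UNIV. \<pi> $ s $ a)"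
    using h unfolding policies_def by (intro member_le_sum) auto
  then show ?thesis using h unfolding policies_def by auto
qed

lemma policies_diam:
  fixes x y :: "real^'a::finite^'s::finite"
  assumes "x \<in> policies" "y \<in> policies"
  shows "norm (x - y) \<le> sqrt (2 * real CARD('s))"
proof (rule real_le_rsqrt)
  have "(norm (x - y))\<^sup>2 = (\<Sum>s\<in>UNIV. \<Sum>a\<in>UNIV. (x $ s $ a - y $ s $ a)\<^sup>2)"
    unfolding power2_norm_eq_inner inner_vec_def by (simp add: power2_eq_square inner_real_def)
  also have "\<dots> \<le> (\<Sum>s\<in>UNIV. \<Sum>a\<in>UNIV. x $ s $ a + y $ s $ a)"
  proof (intro sum_mono)
    fix s a
    have "0 \<le> x $ s $ a" "0 \<le> y $ s $ a" using assms unfolding policies_def by auto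
    moreover have "x $ s $ a \<le> 1" "y $ s $ a \<le> 1" using assms policy_le1 by auto
    ultimately show "(x $ s $ a - y $ s $ a)\<^sup>2 \<le> x $ s $ a + y $ s $ a"
      using sq_le by blast
  qed
  also have "\<dots> = (\<Sum>s\<in>(UNIV::'s set). 2::real)"
    using assms unfolding policies_def by (simp add: sum.distrib)
  also have "\<dots> = 2 * real CARD('s)" by simp
  finally show "(norm (x - y))\<^sup>2 \<le> 2 * real CARD('s)" .
qed

context mdp_ctx
begin

definition rp where "rp R s = (\<Sum>a\<in>UNIV. \<pi> $ s $ a * R s a)"

lemma Vs_W: "Vs P R \<gamma> s \<pi> = (\<Sum>s'\<in>UNIV. W P \<pi> \<gamma> s s' * rp R s')"
  unfolding Vs_def rp_def by (rule W_sum)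

lemma dvis_W: "dvis P \<gamma> \<pi> s s' = (1 - \<gamma>) * W P \<pi> \<gamma> s s'"
  unfolding dvis_def W_def ..

lemma Q_avg: "(\<Sum>a\<in>UNIV. \<pi>' $ s $ a * Qsa P R \<gamma> s a \<pi>'') =
   (\<Sum>a\<in>UNIV. \<pi>' $ s $ a * R s a) + \<gamma> * (\<Sum>s1\<in>UNIV. Ppi P \<pi>' s s1 * Vs P R \<gamma> s1 \<pi>'')"
  unfolding Qsa_def Ppi_def
  by (simp add: algebra_simps sum.distrib sum_distrib_left sum_distrib_right)
     (subst sum.swap, simp add: mult_ac)

lemma bellman: "Vs P R \<gamma> s \<pi> = (\<Sum>a\<in>UNIV. \<pi> $ s $ a * Qsa P R \<gamma> s a \<pi>)"
  unfolding Q_avg Vs_W using W_bellman[of s "rp R"] by (simp add: rp_def)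

lemma pdl:
  "Vs P R \<gamma> s \<pi> - Vs P R \<gamma> s \<pi>'' =
   (\<Sum>s'\<in>UNIV. W P \<pi> \<gamma> s s' * ((\<Sum>a\<in>UNIV. \<pi> $ s' $ a * Qsa P R \<gamma> s' a \<pi>'') - Vs P R \<gamma> s' \<pi>''))"
proof -
  let ?V = "\<lambda>s. Vs P R \<gamma> s \<pi>''"
  have "(\<Sum>s'\<in>UNIV. W P \<pi> \<gamma> s s' * ((\<Sum>a\<in>UNIV. \<pi> $ s' $ a * Qsa P R \<gamma> s' a \<pi>'') - ?V s'))
     = (\<Sum>s'\<in>UNIV. W P \<pi> \<gamma> s s' * rp R s') - (\<Sum>s'\<in>UNIV. W P \<pi> \<gamma> s s' * (?V s' - \<gamma> * (\<Sum>s1\<in>UNIV. Ppi P \<pi> s' s1 * ?V s1)))"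
    unfolding Q_avg rp_def by (simp add: algebra_simps sum_subtractf sum.distrib)
  also have "\<dots> = Vs P R \<gamma> s \<pi> - ?V s" unfolding W_ident Vs_W ..
  finally show ?thesis by simp
qed

end



theorem lemma5:
  fixes P :: "'s::finite \<Rightarrow> 'a::finite \<Rightarrow> 's \<Rightarrow> real"
    and R :: "'s \<Rightarrow> 'a \<Rightarrow> real"
    and \<gamma> L :: real
    and \<rho> \<mu> :: "'s \<Rightarrow> real"
    and \<pi>star \<pi> :: "real^'a^'s"
  assumes P_distr: "\<And>s a. is_distr (P s a)"
    and R_range: "\<And>s a. 0 \<le> R s a \<and> R s a \<le> 1"
    and gamma: "0 \<le> \<gamma>" "\<gamma> < 1"
    and rho: "is_distr \<rho>" and mu: "is_distr \<mu>"
    and pistar: "\<pi>star \<in> policies"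
      "\<And>s \<pi>'. \<pi>' \<in> policies \<Longrightarrow> Vs P R \<gamma> s \<pi>star \<le> Vs P R \<gamma> s \<pi>'"
    and L_pos: "L > 0"
    and smooth: "\<And>\<pi>1 \<pi>2. \<pi>1 \<in> policies \<Longrightarrow> \<pi>2 \<in> policies \<Longrightarrow>
        norm (gradV P R \<gamma> \<mu> \<pi>1 - gradV P R \<gamma> \<mu> \<pi>2) \<le> L * norm (\<pi>1 - \<pi>2)"
    and pi: "\<pi> \<in> policies"
  shows "dist_mismatch (drho P \<gamma> \<rho> \<pi>star) \<mu> = \<infinity> \<or>
    Vrho P R \<gamma> \<rho> (TL P R \<gamma> \<mu> L \<pi>) - Vstar P R \<gamma> \<rho>
      \<le> 2 * sqrt (2 * real CARD('s)) / (1 - \<gamma>)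
         * real_of_ereal (dist_mismatch (drho P \<gamma> \<rho> \<pi>star) \<mu>)
         * norm (GL P R \<gamma> \<mu> L \<pi>)"
proof (cases "dist_mismatch (drho P \<gamma> \<rho> \<pi>star) \<mu> = \<infinity>")
  case True
  then show ?thesis by simp
next
  case False
  define pp where "pp = TL P R \<gamma> \<mu> L \<pi>"
  define G where "G = GL P R \<gamma> \<mu> L \<pi>"
  define gr where "gr = gradV P R \<gamma> \<mu>"
  define M where "M = real_of_ereal (dist_mismatch (drho P \<gamma> \<rho> \<pi>star) \<mu>)"
  define ds where "ds = drho P \<gamma> \<rho> \<pi>star"
  define dm where "dm = drho P \<gamma> \<mu> pp"
  define D where "D = sqrt (2 * real CARD('s))"
  define Q where "Q s a = Qsa P R \<gamma> s a pp" for s a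
  have G_def': "G = L *\<^sub>R (\<pi> - pp)" unfolding G_def GL_def pp_def ..
  have ne: "policies \<noteq> {}" using policies_ne by blast
  have pp_pol: "pp \<in> policies"
    unfolding pp_def TL_def by (rule closest_point_in_set[OF policies_closed ne])
  interpret Ap: mdp_ctx P pp \<gamma> using P_distr pp_pol gamma by unfold_locales auto
  interpret As: mdp_ctx P \<pi>star \<gamma> using P_distr pistar(1) gamma by unfold_locales auto

  have rho0: "\<And>s. 0 \<le> \<rho> s" and mu0: "\<And>s. 0 \<le> \<mu> s" using rho mu unfolding is_distr_def by auto
  have ds0: "0 \<le> ds s" for s
    unfolding ds_def drho_def using rho0 As.W_nonneg gamma
    by (auto intro!: sum_nonneg mult_nonneg_nonneg simp: As.dvis_W)
  have dm_ge: "(1 - \<gamma>) * \<mu> s \<le> dm s" for s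
  proof -
    have "\<mu> s * 1 \<le> \<mu> s * W P pp \<gamma> s s" by (rule mult_left_mono[OF Ap.W_diag mu0])
    then have "(1 - \<gamma>) * (\<mu> s * 1) \<le> (1 - \<gamma>) * (\<mu> s * W P pp \<gamma> s s)"
      using mult_left_mono[of "\<mu> s * 1" "\<mu> s * W P pp \<gamma> s s" "1 - \<gamma>"] gamma by linarith
    then have "(1 - \<gamma>) * \<mu> s \<le> \<mu> s * dvis P \<gamma> pp s s"
      by (simp add: Ap.dvis_W mult_ac)
    also have "\<dots> \<le> dm s" unfolding dm_def drho_def
      using mu0 Ap.W_nonneg gamma
      by (intro member_le_sum[where f="\<lambda>s0. \<mu> s0 * dvis P \<gamma> pp s0 s"]) (auto simp: Ap.dvis_W)
    finally show ?thesis .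
  qed

  have Mprop: "0 \<le> M \<and> (\<forall>s. ds s \<le> M * \<mu> s)"
  proof -
    let ?e = "\<lambda>s. ratio_entry (ds s) (\<mu> s)"
    have Mdef: "dist_mismatch ds \<mu> = Max (range ?e)" unfolding dist_mismatch_def ..
    have nf: "dist_mismatch ds \<mu> \<noteq> \<infinity>" using False unfolding ds_def .
    have ege: "?e s \<le> dist_mismatch ds \<mu>" for s unfolding Mdef by (rule Max_ge) auto
    have efin: "?e s \<noteq> \<infinity>" for s using ege[of s] nf by auto
    have e0: "0 \<le> ?e s" for s unfolding ratio_entry_def using ds0 mu0 by auto
    have Mge: "0 \<le> dist_mismatch ds \<mu>" using e0 ege order_trans by blast
    have Mreal: "dist_mismatch ds \<mu> = ereal M" unfolding M_def ds_def[symmetric]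
      using nf Mge by (cases "dist_mismatch ds \<mu>") auto
    have M0: "0 \<le> M" using Mreal Mge by auto
    have "ds s \<le> M * \<mu> s" for s
    proof (cases "\<mu> s = 0")
      case True
      then have "ds s = 0" using efin[of s] unfolding ratio_entry_def by (auto split: if_splits)
      then show ?thesis using True by simp
    next
      case False
      then have pos: "0 < \<mu> s" using mu0[of s] by (simp add: order_le_less)
      have "ereal (ds s / \<mu> s) \<le> ereal M" using ege[of s] Mreal False unfolding ratio_entry_def by simp
      then have "ds s / \<mu> s \<le> M" by simp
      then show ?thesis using pos by (simp add: pos_divide_le_eq)
    qed
    then show ?thesis using M0 by auto
  qed

  have proj: "inner (gr \<pi>) (pp - pb) \<le> inner G (pp - pb)" if pb: "pb \<in> policies" for pb
  proof -
    have "inner ((\<pi> - (1 / L) *\<^sub>R gr \<pi>) - pp) (pb - pp) \<le> 0"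
      unfolding pp_def TL_def gr_def by (rule closest_point_dot[OF policies_convex policies_closed pb])
    moreover have "(\<pi> - (1 / L) *\<^sub>R gr \<pi>) - pp = (1 / L) *\<^sub>R (G - gr \<pi>)"
      unfolding G_def' using L_pos by (simp add: algebra_simps)
    ultimately have "(1 / L) * inner (G - gr \<pi>) (pb - pp) \<le> 0" by simp
    then have "inner (G - gr \<pi>) (pb - pp) \<le> 0" using L_pos
      by (simp add: divide_le_0_iff)
    then show ?thesis by (simp add: inner_diff_left inner_diff_right)
  qed
  have gbound: "inner (gr pp) (pp - pb) \<le> 2 * D * norm G" if pb: "pb \<in> policies" for pb
  proof -
    have dd: "norm (pp - pb) \<le> D" unfolding D_def by (rule policies_diam[OF pp_pol pb])
    have "inner (gr pp) (pp - pb) = inner (gr \<pi>) (pp - pb) + inner (gr pp - gr \<pi>) (pp - pb)"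
      by (simp add: inner_diff_left)
    also have "\<dots> \<le> inner G (pp - pb) + norm (gr pp - gr \<pi>) * norm (pp - pb)"
      using proj[OF pb] norm_cauchy_schwarz by (intro add_mono) auto
    also have "\<dots> \<le> norm G * norm (pp - pb) + (L * norm (pp - \<pi>)) * norm (pp - pb)"
      using norm_cauchy_schwarz smooth[OF pp_pol pi] unfolding gr_def
      by (intro add_mono mult_right_mono) auto
    also have "L * norm (pp - \<pi>) = norm G" unfolding G_def' using L_pos
      by (simp add: norm_minus_commute)
    also have "norm G * norm (pp - pb) + norm G * norm (pp - pb) \<le> 2 * D * norm G"
      using mult_left_mono[OF dd norm_ge_zero[of G]] by (simp add: mult.commute)
    finally show ?thesis by simp
  qed

  have "\<exists>a. \<forall>b. Q s a \<le> Q s b" for s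
  proof -
    have "Min (range (Q s)) \<in> range (Q s)" by (rule Min_in) auto
    then obtain a where "Q s a = Min (range (Q s))" by (metis rangeE)
    moreover have "Min (range (Q s)) \<le> Q s b" for b by (rule Min_le) auto
    ultimately show ?thesis by metis
  qed
  then obtain amin where amin: "\<And>s b. Q s (amin s) \<le> Q s b" by metis
  define pb :: "real^'a^'s" where "pb = (\<chi> s a. if a = amin s then 1 else 0)"
  have pb_pol: "pb \<in> policies" unfolding pb_def policies_def by auto
  define gs where "gs s = (\<Sum>a\<in>UNIV. pp $ s $ a * Q s a) - Q s (amin s)" for s
  have pp_sum: "(\<Sum>a\<in>UNIV. pp $ s $ a * c) = c" for s c
    using pp_pol unfolding policies_def by (simp add: sum_distrib_right[symmetric])
  have gs0: "0 \<le> gs s" for s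
  proof -
    have "(\<Sum>a\<in>UNIV. pp $ s $ a * Q s (amin s)) \<le> (\<Sum>a\<in>UNIV. pp $ s $ a * Q s a)"
      using pp_pol amin unfolding policies_def by (intro sum_mono mult_left_mono) auto
    then show ?thesis unfolding gs_def pp_sum by simp
  qed
  have h_le: "(\<Sum>a\<in>UNIV. pp $ s $ a * Q s a) - (\<Sum>a\<in>UNIV. \<pi>star $ s $ a * Q s a) \<le> gs s" for s
  proof -
    have "(\<Sum>a\<in>UNIV. \<pi>star $ s $ a * Q s (amin s)) \<le> (\<Sum>a\<in>UNIV. \<pi>star $ s $ a * Q s a)"
      using pistar(1) amin unfolding policies_def by (intro sum_mono mult_left_mono) auto
    moreover have "(\<Sum>a\<in>UNIV. \<pi>star $ s $ a * Q s (amin s)) = Q s (amin s)"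
      using pistar(1) unfolding policies_def by (simp add: sum_distrib_right[symmetric])
    ultimately show ?thesis unfolding gs_def by simp
  qed
  have inner_eq: "inner (gr pp) (pp - pb) = 1 / (1 - \<gamma>) * (\<Sum>s\<in>UNIV. dm s * gs s)"
  proof -
    have pbQ: "(\<Sum>a\<in>UNIV. pb $ s $ a * Q s a) = Q s (amin s)" for s
    proof -
      have e: "\<And>c x. (if c then 1 else 0) * (x::real) = (if c then x else 0)" by simp
      show ?thesis unfolding pb_def by (simp add: e)
    qed
    have "inner (gr pp) (pp - pb) = (\<Sum>s\<in>UNIV. 1 / (1 - \<gamma>) * dm s * (\<Sum>a\<in>UNIV. Q s a * (pp $ s $ a - pb $ s $ a)))"
      unfolding inner_vec_def gr_def gradV_def dm_def Q_def
      by (simp add: inner_real_def sum_distrib_left mult.assoc)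
    also have "\<dots> = (\<Sum>s\<in>UNIV. 1 / (1 - \<gamma>) * dm s * gs s)"
      unfolding gs_def pbQ[symmetric]
      by (simp add: algebra_simps sum_subtractf)
    finally show ?thesis by (simp add: sum_distrib_left mult.assoc)
  qed

  have Vstar_eq: "Vstar P R \<gamma> \<rho> = Vrho P R \<gamma> \<rho> \<pi>star"
    unfolding Vstar_def
  proof (rule cInf_eq_minimum)
    show "Vrho P R \<gamma> \<rho> \<pi>star \<in> Vrho P R \<gamma> \<rho> ` policies" using pistar(1) by blast
    fix x assume "x \<in> Vrho P R \<gamma> \<rho> ` policies"
    then obtain p where p: "p \<in> policies" "x = Vrho P R \<gamma> \<rho> p" by blast
    show "Vrho P R \<gamma> \<rho> \<pi>star \<le> x" unfolding p Vrho_def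
      using pistar(2)[OF p(1)] rho0 by (intro sum_mono mult_left_mono) auto
  qed
  have diff_eq: "Vrho P R \<gamma> \<rho> pp - Vrho P R \<gamma> \<rho> \<pi>star
     = 1 / (1 - \<gamma>) * (\<Sum>s\<in>UNIV. ds s * ((\<Sum>a\<in>UNIV. pp $ s $ a * Q s a) - (\<Sum>a\<in>UNIV. \<pi>star $ s $ a * Q s a)))"
  proof -
    define h where "h s = (\<Sum>a\<in>UNIV. pp $ s $ a * Q s a) - (\<Sum>a\<in>UNIV. \<pi>star $ s $ a * Q s a)" for s
    have b: "Vs P R \<gamma> s' pp = (\<Sum>a\<in>UNIV. pp $ s' $ a * Q s' a)" for s'
      unfolding Q_def by (rule Ap.bellman)
    have hs0: "Vs P R \<gamma> s \<pi>star - Vs P R \<gamma> s pp = (\<Sum>s'\<in>UNIV. W P \<pi>star \<gamma> s s' * ((\<Sum>a\<in>UNIV. \<pi>star $ s' $ a * Q s' a) - (\<Sum>a\<in>UNIV. pp $ s' $ a * Q s' a)))" for s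
      using As.pdl[of R s pp] unfolding b Q_def .
    have hs: "Vs P R \<gamma> s pp - Vs P R \<gamma> s \<pi>star = (\<Sum>s'\<in>UNIV. W P \<pi>star \<gamma> s s' * h s')" for s
    proof -
      have "(\<Sum>s'\<in>UNIV. W P \<pi>star \<gamma> s s' * h s') = - (\<Sum>s'\<in>UNIV. W P \<pi>star \<gamma> s s' * ((\<Sum>a\<in>UNIV. \<pi>star $ s' $ a * Q s' a) - (\<Sum>a\<in>UNIV. pp $ s' $ a * Q s' a)))"
        unfolding h_def by (simp add: sum_negf[symmetric] algebra_simps)
      then show ?thesis using hs0[of s] by simp
    qed
    have dsW: "(\<Sum>s\<in>UNIV. \<rho> s * W P \<pi>star \<gamma> s s') = ds s' / (1 - \<gamma>)" for s'
      unfolding ds_def drho_def As.dvis_W using gamma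
      by (simp add: sum_distrib_left[symmetric] mult.left_commute[of "\<rho> _"])
    have "Vrho P R \<gamma> \<rho> pp - Vrho P R \<gamma> \<rho> \<pi>star = (\<Sum>s\<in>UNIV. \<rho> s * (Vs P R \<gamma> s pp - Vs P R \<gamma> s \<pi>star))"
      unfolding Vrho_def by (simp add: sum_subtractf right_diff_distrib)
    also have "\<dots> = (\<Sum>s\<in>UNIV. \<Sum>s'\<in>UNIV. \<rho> s * W P \<pi>star \<gamma> s s' * h s')"
      unfolding hs by (simp add: sum_distrib_left mult.assoc)
    also have "\<dots> = (\<Sum>s'\<in>UNIV. (\<Sum>s\<in>UNIV. \<rho> s * W P \<pi>star \<gamma> s s') * h s')"
      by (subst sum.swap) (simp add: sum_distrib_right)
    also have "\<dots> = 1 / (1 - \<gamma>) * (\<Sum>s\<in>UNIV. ds s * h s)"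
      unfolding dsW by (simp add: sum_distrib_left)
    finally show ?thesis unfolding h_def .
  qed

  have c0: "0 \<le> 1 / (1 - \<gamma>)" using gamma by simp
  have s1: "(\<Sum>s\<in>UNIV. ds s * ((\<Sum>a\<in>UNIV. pp $ s $ a * Q s a) - (\<Sum>a\<in>UNIV. \<pi>star $ s $ a * Q s a)))
      \<le> (\<Sum>s\<in>UNIV. M * (dm s * gs s / (1 - \<gamma>)))"
  proof (rule sum_mono)
    fix s
    have "ds s * ((\<Sum>a\<in>UNIV. pp $ s $ a * Q s a) - (\<Sum>a\<in>UNIV. \<pi>star $ s $ a * Q s a)) \<le> ds s * gs s"
      by (rule mult_left_mono[OF h_le ds0])
    also have "\<dots> \<le> (M * \<mu> s) * gs s"
      using Mprop by (intro mult_right_mono[OF _ gs0]) auto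
    also have "\<mu> s \<le> dm s / (1 - \<gamma>)" using dm_ge[of s] gamma by (simp add: field_simps)
    then have "(M * \<mu> s) * gs s \<le> (M * (dm s / (1 - \<gamma>))) * gs s"
      using Mprop gs0 by (intro mult_right_mono mult_left_mono) auto
    finally show "ds s * ((\<Sum>a\<in>UNIV. pp $ s $ a * Q s a) - (\<Sum>a\<in>UNIV. \<pi>star $ s $ a * Q s a)) \<le> M * (dm s * gs s / (1 - \<gamma>))"
      by simp
  qed
  have "Vrho P R \<gamma> \<rho> pp - Vstar P R \<gamma> \<rho> \<le> 1 / (1 - \<gamma>) * (\<Sum>s\<in>UNIV. M * (dm s * gs s / (1 - \<gamma>)))"
    unfolding Vstar_eq diff_eq by (rule mult_left_mono[OF s1 c0])
  also have "\<dots> = 1 / (1 - \<gamma>) * M * inner (gr pp) (pp - pb)"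
    unfolding inner_eq by (simp add: sum_distrib_left sum_divide_distrib[symmetric] field_simps)
  also have "\<dots> \<le> 1 / (1 - \<gamma>) * M * (2 * D * norm G)"
    using gbound[OF pb_pol] Mprop gamma by (intro mult_left_mono) auto
  finally show ?thesis unfolding pp_def G_def M_def D_def ds_def by (simp add: field_simps)
qed

end
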